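(* Suppose $M\preceq N$ are small models in $\mathbb{C}$ and $\langle A_i:i\in I\rangle$ is an $M$-f.s. sequence with $M\cup\bigcup_{i\in I}A_i=N$. Then for every initial segment $I_0\subseteq I$ (with or without a maximum), $M\cup\bigcup_{i\in I_0}A_i$ is an elementary substructure of $N$.
   Context: Work in a monster model $\mathbb{C}$ of an arbitrary complete theory. For $B\supseteq M$, $\mathrm{tp}(X/B)$ is finitely satisfied in $M$ if each of its formulas is satisfied by a tuple from $M$. An $M$-f.s. sequence is a sequence of sets $\langle A_i:i\in I\rangle$ with $\mathrm{tp}(A_i/A_{<i}M)$ finitely satisfied in $M$ for every $i$, where $A_{<i}=\bigcup_{j<i}A_j$. *)

theory Defs
  imports Main
begin

text \<open>The ambient (monster) structure C has universe
  UNIV :: 'a set, function symbols 'f interpreted by Fi and relation symbols 'r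
  interpreted by Ri (symbols act on argument lists).\<close>

datatype 'f fterm = Var nat | Fn 'f "'f fterm list"

datatype ('f, 'r) fform =
    FEq "'f fterm" "'f fterm"
  | FRel 'r "'f fterm list"
  | FNeg "('f, 'r) fform"
  | FConj "('f, 'r) fform" "('f, 'r) fform"
  | FEx nat "('f, 'r) fform"

fun tvars :: "'f fterm \<Rightarrow> nat set" where
  "tvars (Var x) = {x}"
| "tvars (Fn f ts) = (\<Union>t\<in>set ts. tvars t)"

fun fv :: "('f, 'r) fform \<Rightarrow> nat set" where
  "fv (FEq s t) = tvars s \<union> tvars t"
| "fv (FRel r ts) = (\<Union>t\<in>set ts. tvars t)"
| "fv (FNeg p) = fv p"
| "fv (FConj p q) = fv p \<union> fv q"
| "fv (FEx x p) = fv p - {x}"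

fun teval :: "('f \<Rightarrow> 'a list \<Rightarrow> 'a) \<Rightarrow> (nat \<Rightarrow> 'a) \<Rightarrow> 'f fterm \<Rightarrow> 'a" where
  "teval Fi v (Var x) = v x"
| "teval Fi v (Fn f ts) = Fi f (map (teval Fi v) ts)"

text \<open>Satisfaction in the substructure of C with domain D (quantifiers range over D).\<close>
fun sat :: "('f \<Rightarrow> 'a list \<Rightarrow> 'a) \<Rightarrow> ('r \<Rightarrow> 'a list \<Rightarrow> bool) \<Rightarrow> 'a set
            \<Rightarrow> ('f, 'r) fform \<Rightarrow> (nat \<Rightarrow> 'a) \<Rightarrow> bool" where
  "sat Fi Ri D (FEq s t) v = (teval Fi v s = teval Fi v t)"
| "sat Fi Ri D (FRel r ts) v = Ri r (map (teval Fi v) ts)"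
| "sat Fi Ri D (FNeg p) v = (\<not> sat Fi Ri D p v)"
| "sat Fi Ri D (FConj p q) v = (sat Fi Ri D p v \<and> sat Fi Ri D q v)"
| "sat Fi Ri D (FEx x p) v = (\<exists>d\<in>D. sat Fi Ri D p (v(x := d)))"

definition substr :: "('f \<Rightarrow> 'a list \<Rightarrow> 'a) \<Rightarrow> 'a set \<Rightarrow> bool" where
  "substr Fi D \<longleftrightarrow> D \<noteq> {} \<and> (\<forall>f as. set as \<subseteq> D \<longrightarrow> Fi f as \<in> D)"

definition elem_sub :: "('f \<Rightarrow> 'a list \<Rightarrow> 'a) \<Rightarrow> ('r \<Rightarrow> 'a list \<Rightarrow> bool)
                        \<Rightarrow> 'a set \<Rightarrow> 'a set \<Rightarrow> bool" where
  "elem_sub Fi Ri X Y \<longleftrightarrow> X \<subseteq> Y \<and> substr Fi X \<and> substr Fi Y \<and>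
     (\<forall>(\<phi> :: ('f, 'r) fform) v. v ` fv \<phi> \<subseteq> X \<longrightarrow> (sat Fi Ri X \<phi> v \<longleftrightarrow> sat Fi Ri Y \<phi> v))"

text \<open>tp(X/B) (computed in C) is finitely satisfied in M: every formula
  \<phi>(x,b) with x a finite tuple of variables assigned to elements of X and the
  remaining free variables assigned to elements of B, true in C, is satisfied
  by some tuple from M in place of x.\<close>
definition fin_sat :: "('f \<Rightarrow> 'a list \<Rightarrow> 'a) \<Rightarrow> ('r \<Rightarrow> 'a list \<Rightarrow> bool)
                       \<Rightarrow> 'a set \<Rightarrow> 'a set \<Rightarrow> 'a set \<Rightarrow> bool" where
  "fin_sat Fi Ri X B M \<longleftrightarrow>
     (\<forall>(\<phi> :: ('f, 'r) fform) v S. finite S \<and> v ` S \<subseteq> X \<and> v ` (fv \<phi> - S) \<subseteq> B \<and>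
        sat Fi Ri UNIV \<phi> v \<longrightarrow>
        (\<exists>w. w ` S \<subseteq> M \<and> (\<forall>y. y \<notin> S \<longrightarrow> w y = v y) \<and> sat Fi Ri UNIV \<phi> w))"

definition fs_seq :: "('f \<Rightarrow> 'a list \<Rightarrow> 'a) \<Rightarrow> ('r \<Rightarrow> 'a list \<Rightarrow> bool)
                      \<Rightarrow> 'a set \<Rightarrow> ('i::linorder) set \<Rightarrow> ('i \<Rightarrow> 'a set) \<Rightarrow> bool" where
  "fs_seq Fi Ri M I A \<longleftrightarrow>
     (\<forall>i\<in>I. fin_sat Fi Ri (A i) ((\<Union>j\<in>{j\<in>I. j < i}. A j) \<union> M) M)"

end

theory Submission
  imports Defs
begin

lemma map_teval_upd:
  "map (teval Fi ((\<lambda>i. if i < length as then as ! i else c)(length as := d))) (map Var [0..<length as]) = as"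
proof (rule nth_equalityI)
  show "length (map (teval Fi ((\<lambda>i. if i < length as then as ! i else c)(length as := d))) (map Var [0..<length as])) = length as" by simp
  fix i assume "i < length (map (teval Fi ((\<lambda>i. if i < length as then as ! i else c)(length as := d))) (map Var [0..<length as]))"
  then have i: "i < length as" by simp
  then show "map (teval Fi ((\<lambda>i. if i < length as then as ! i else c)(length as := d))) (map Var [0..<length as]) ! i = as ! i"
    by simp
qed

lemma tv_sat:
  assumes TV: "\<And>p x v d. v ` (fv p - {x}) \<subseteq> D \<Longrightarrow> sat Fi Ri UNIV p (v(x:=d))
                 \<Longrightarrow> \<exists>d'\<in>D. sat Fi Ri UNIV p (v(x:=d'))"
  shows "v ` fv \<phi> \<subseteq> D \<Longrightarrow> sat Fi Ri D \<phi> v = sat Fi Ri UNIV \<phi> v"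
proof (induction \<phi> arbitrary: v)
  case (FEx x p)
  have h: "\<And>d. d \<in> D \<Longrightarrow> (v(x:=d)) ` fv p \<subseteq> D" using FEx.prems by auto
  show ?case
  proof
    assume "sat Fi Ri D (FEx x p) v"
    then obtain d where "d \<in> D" "sat Fi Ri D p (v(x:=d))" by auto
    then have "sat Fi Ri UNIV p (v(x:=d))" using FEx.IH[OF h] by blast
    then show "sat Fi Ri UNIV (FEx x p) v" by (auto simp del: fun_upd_apply)
  next
    assume "sat Fi Ri UNIV (FEx x p) v"
    then obtain d where "sat Fi Ri UNIV p (v(x:=d))" by auto
    then obtain d' where "d' \<in> D" "sat Fi Ri UNIV p (v(x:=d'))"
      using TV[of v p x d] FEx.prems by auto
    then have "sat Fi Ri D p (v(x:=d'))" using FEx.IH[OF h] by blast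
    then show "sat Fi Ri D (FEx x p) v" using \<open>d' \<in> D\<close> by (auto simp del: fun_upd_apply)
  qed
qed auto

theorem lemma2:
  fixes Fi :: "'f \<Rightarrow> 'a list \<Rightarrow> 'a" and Ri :: "'r \<Rightarrow> 'a list \<Rightarrow> bool"
    and M N :: "'a set" and I :: "('i::linorder) set" and A :: "'i \<Rightarrow> 'a set"
  assumes "elem_sub Fi Ri M (UNIV :: 'a set)"
    and "elem_sub Fi Ri N (UNIV :: 'a set)"
    and "elem_sub Fi Ri M N"
    and "fs_seq Fi Ri M I A"
    and "M \<union> (\<Union>i\<in>I. A i) = N"
  shows "\<forall>I0. I0 \<subseteq> I \<and> (\<forall>i\<in>I0. \<forall>j\<in>I. j < i \<longrightarrow> j \<in> I0) \<longrightarrow>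
           elem_sub Fi Ri (M \<union> (\<Union>i\<in>I0. A i)) N"
proof (intro allI impI)
  fix I0 assume I0: "I0 \<subseteq> I \<and> (\<forall>i\<in>I0. \<forall>j\<in>I. j < i \<longrightarrow> j \<in> I0)"
  define D where "D = M \<union> (\<Union>i\<in>I0. A i)"
  have DN: "D \<subseteq> N" using I0 assms(5) unfolding D_def by auto
  have NU: "\<And>(\<phi>::('f,'r) fform) v. v ` fv \<phi> \<subseteq> N \<Longrightarrow> sat Fi Ri N \<phi> v = sat Fi Ri UNIV \<phi> v"
    using assms(2) unfolding elem_sub_def by auto
  have TV: "\<exists>d'\<in>D. sat Fi Ri UNIV p (v(x:=d'))"
    if vD: "v ` (fv p - {x}) \<subseteq> D" and sd: "sat Fi Ri UNIV p (v(x:=d))" for p :: "('f,'r) fform" and x v d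
  proof -
    have "sat Fi Ri UNIV (FEx x p) v" using sd by auto
    then have "sat Fi Ri N (FEx x p) v" using NU[of v "FEx x p"] vD DN by auto
    then obtain c where c: "c \<in> N" "sat Fi Ri N p (v(x:=c))" by auto
    have "(v(x:=c)) ` fv p \<subseteq> N" using vD DN c(1) by auto
    then have sc: "sat Fi Ri UNIV p (v(x:=c))" using NU[of "v(x:=c)" p] c(2) by auto
    show ?thesis
    proof (cases "c \<in> D")
      case True then show ?thesis using sc by blast
    next
      case False
      then obtain j where j: "j \<in> I" "c \<in> A j" "j \<notin> I0"
        using c(1) assms(5) unfolding D_def by auto
      have lt: "\<And>i. i \<in> I0 \<Longrightarrow> i < j"
      proof -
        fix i assume i: "i \<in> I0"
        show "i < j"
        proof (rule ccontr)
          assume "\<not> i < j"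
          then have "j < i \<or> j = i" by auto
          then show False using I0 i j by auto
        qed
      qed
      define B where "B = (\<Union>k\<in>{k\<in>I. k < j}. A k) \<union> M"
      have DB: "D \<subseteq> B" using lt I0 unfolding D_def B_def by blast
      have fs: "fin_sat Fi Ri (A j) B M" using assms(4) j(1) unfolding fs_seq_def B_def by blast
      have "finite {x}" "(v(x:=c)) ` {x} \<subseteq> A j" "(v(x:=c)) ` (fv p - {x}) \<subseteq> B"
        using j(2) vD DB by auto
      then obtain w where w: "w ` {x} \<subseteq> M" "\<forall>y. y \<notin> {x} \<longrightarrow> w y = (v(x:=c)) y"
          "sat Fi Ri UNIV p w"
        using fs sc unfolding fin_sat_def by (elim allE[of _ p] allE[of _ "v(x:=c)"] allE[of _ "{x}"]) auto
      have "w = v(x := w x)" using w(2) by auto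
      then have "sat Fi Ri UNIV p (v(x := w x))" using w(3) by metis
      moreover have "w x \<in> D" using w(1) unfolding D_def by auto
      ultimately show ?thesis by blast
    qed
  qed
  have DU: "\<And>(\<phi>::('f,'r) fform) v. v ` fv \<phi> \<subseteq> D \<Longrightarrow> sat Fi Ri D \<phi> v = sat Fi Ri UNIV \<phi> v"
    by (rule tv_sat[where D=D], rule TV)
  have Mne: "M \<noteq> {}" using assms(1) unfolding elem_sub_def substr_def by blast
  have subD: "substr Fi D"
    unfolding substr_def
  proof (intro conjI allI impI)
    show "D \<noteq> {}" using Mne unfolding D_def by blast
  next
    fix f as assume as: "set as \<subseteq> D"
    define n where "n = length as"
    define v where "v = (\<lambda>i. if i < n then as ! i else Fi f as)"
    define \<phi> :: "('f,'r) fform" where "\<phi> = FEx n (FEq (Var n) (Fn f (map Var [0..<n])))"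
    have tv: "\<And>d. map (teval Fi (v(n:=d))) (map Var [0..<n]) = as"
      unfolding v_def n_def by (rule map_teval_upd)
    have fvphi: "fv \<phi> = {0..<n}" unfolding \<phi>_def by auto
    have vD: "v ` fv \<phi> \<subseteq> D" unfolding fvphi v_def n_def using as by (auto simp: subset_iff)
    have s1: "sat Fi Ri UNIV \<phi> v" unfolding \<phi>_def sat.simps teval.simps tv by simp
    then have "sat Fi Ri D \<phi> v" using DU[OF vD] by simp
    then obtain d where d: "d \<in> D" "teval Fi (v(n:=d)) (Var n) = Fi f (map (teval Fi (v(n:=d))) (map Var [0..<n]))"
      unfolding \<phi>_def sat.simps teval.simps by blast
    have "d = Fi f as" using d(2) unfolding tv by simp
    then show "Fi f as \<in> D" using d(1) by simp
  qed
  show "elem_sub Fi Ri (M \<union> (\<Union>i\<in>I0. A i)) N"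
    unfolding D_def[symmetric] elem_sub_def
  proof (intro conjI allI impI)
    show "D \<subseteq> N" by (rule DN)
    show "substr Fi D" by (rule subD)
    show "substr Fi N" using assms(2) unfolding elem_sub_def by blast
  next
    fix \<phi> :: "('f,'r) fform" and v assume "v ` fv \<phi> \<subseteq> D"
    then have "v ` fv \<phi> \<subseteq> N" using DN by auto
    then show "sat Fi Ri D \<phi> v = sat Fi Ri N \<phi> v" using DU[OF \<open>v ` fv \<phi> \<subseteq> D\<close>] NU by auto
  qed
qed

end
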